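(* Let $n \geq 2$ and $2 \leq k \leq n$. Then the lower convex envelope of $Q_k$ on the nonnegative orthant $\mathbb{R}_+^n$ is identically $0$, and $Q_k$ has no lower convex envelope on $\mathbb{R}^n$, i.e. there is no convex function $f : \mathbb{R}^n \to \mathbb{R}$ with $f \leq Q_k$ on $\mathbb{R}^n$.
   Context: For $x \in \mathbb{R}^n$ and an integer $1 \leq k \leq n$, $Q_k(x)$ denotes the $k$-th largest entry of $x$ (entries counted with multiplicity). The lower convex envelope of a function $g$ on a convex set $D$ is the pointwise supremum of all convex functions $h : D \to \mathbb{R}$ satisfying $h \leq g$ on $D$ (i.e. the largest convex function below $g$ on $D$). *)

theory Defs
  imports "HOL-Analysis.Analysis" "HOL-Library.Multiset"
begin

text \<open>The k-th largest entry of x (1-based, entries counted with multiplicity).\<close>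
definition Qk :: "nat \<Rightarrow> real ^ 'n \<Rightarrow> real" where
  "Qk k x = rev (sorted_list_of_multiset (image_mset (\<lambda>i. x $ i) (mset_set (UNIV :: 'n set)))) ! (k - 1)"

definition lower_convex_envelope :: "('a::real_vector \<Rightarrow> real) \<Rightarrow> 'a set \<Rightarrow> 'a \<Rightarrow> real" where
  "lower_convex_envelope g D x = (SUP h \<in> {h. convex_on D h \<and> (\<forall>y\<in>D. h y \<le> g y)}. h x)"

definition nonneg_orthant :: "(real ^ 'n) set" where
  "nonneg_orthant = {x. \<forall>i. 0 \<le> x $ i}"

end

theory Submission
  imports Defs
begin

lemma Qk_spike:
  fixes i :: "'n::finite"
  assumes "0 \<le> c" "2 \<le> k" "k \<le> CARD('n)"
  shows "Qk k (\<chi> j. if j = i then c + d else d) = d"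
proof -
  let ?x = "(\<chi> j. if j = i then c + d else d) :: real ^ 'n"
  have U: "(UNIV :: 'n set) = insert i (UNIV - {i})" by auto
  have "image_mset (\<lambda>j. ?x $ j) (mset_set (UNIV :: 'n set))
      = add_mset (c + d) (image_mset (\<lambda>j. ?x $ j) (mset_set (UNIV - {i})))"
    by (subst U, subst mset_set.insert) auto
  also have "image_mset (\<lambda>j. ?x $ j) (mset_set (UNIV - {i})) = image_mset (\<lambda>j. d) (mset_set (UNIV - {i}))"
    by (rule image_mset_cong) auto
  also have "\<dots> = replicate_mset (CARD('n) - 1) d"
    by (simp add: image_mset_const_eq card_Diff_singleton)
  finally have M: "image_mset (\<lambda>j. ?x $ j) (mset_set (UNIV :: 'n set)) = mset (replicate (CARD('n) - 1) d @ [c + d])"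
    by simp
  have S: "sorted (replicate (CARD('n) - 1) d @ [c + d])"
    using assms(1) by (auto simp: sorted_append)
  have "Qk k ?x = rev (replicate (CARD('n) - 1) d @ [c + d]) ! (k - 1)"
    unfolding Qk_def M sorted_list_of_multiset_mset sorted_sort_id[OF S] ..
  also have "\<dots> = ((c+d) # replicate (CARD('n) - 1) d) ! (k - 1)" by simp
  also have "\<dots> = d" using assms by (cases "k - 1") auto
  finally show ?thesis .
qed

lemma avg_eq:
  fixes x :: "real ^ 'n::finite"
  shows "(\<Sum>i\<in>UNIV. (1 / real CARD('n)) *\<^sub>R (\<chi> j. if j = i then real CARD('n) * x $ i + d else d)) = x + (\<chi> j. d)"
proof -
  have n0: "real CARD('n) \<noteq> 0" by simp
  show ?thesis
  proof (subst vec_eq_iff, intro allI)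
    fix j :: 'n
    have "(\<Sum>i\<in>UNIV. (1 / real CARD('n)) * (if j = i then real CARD('n) * x $ i + d else d))
        = (\<Sum>i\<in>UNIV. (1 / real CARD('n)) * (if j = i then real CARD('n) * x $ i else 0) + d / real CARD('n))"
      by (rule sum.cong) (auto simp: add_divide_distrib)
    also have "\<dots> = (\<Sum>i\<in>UNIV. (1 / real CARD('n)) * (if j = i then real CARD('n) * x $ i else 0)) + (\<Sum>i\<in>(UNIV::'n set). d / real CARD('n))"
      by (simp only: sum.distrib)
    also have "(\<Sum>i\<in>UNIV. (1 / real CARD('n)) * (if j = i then real CARD('n) * x $ i else 0)) = (\<Sum>i\<in>UNIV. (if j = i then x $ i else 0))"
      by (rule sum.cong) (use n0 in auto)
    also have "\<dots> = x $ j" by simp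
    also have "(\<Sum>i\<in>(UNIV::'n set). d / real CARD('n)) = d" using n0 by simp
    finally show "(\<Sum>i\<in>UNIV. (1 / real CARD('n)) *\<^sub>R (\<chi> j. if j = i then real CARD('n) * x $ i + d else d)) $ j = (x + (\<chi> j. d)) $ j"
      by simp
  qed
qed

lemma jensen_avg:
  fixes f :: "real ^ 'n::finite \<Rightarrow> real" and y :: "'n \<Rightarrow> real ^ 'n"
  assumes "convex_on C f" "\<And>i. y i \<in> C"
  shows "f (\<Sum>i\<in>UNIV. (1 / real CARD('n)) *\<^sub>R y i) \<le> (\<Sum>i\<in>UNIV. (1 / real CARD('n)) * f (y i))"
  by (rule convex_on_sum) (use assms in auto)

theorem theorem2:
  fixes k :: nat
  assumes "CARD('n::finite) \<ge> 2" and "2 \<le> k" and "k \<le> CARD('n)"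
  shows "(\<forall>x \<in> (nonneg_orthant :: (real ^ 'n) set).
            lower_convex_envelope (Qk k) nonneg_orthant x = 0)
       \<and> \<not> (\<exists>f :: real ^ 'n \<Rightarrow> real. convex_on UNIV f \<and> (\<forall>x. f x \<le> Qk k x))"
proof
  let ?n = "real CARD('n)"
  have Qnn: "Qk k x \<ge> 0" if "x \<in> nonneg_orthant" for x :: "real ^ 'n"
  proof -
    obtain i where "Qk k x = x $ i"
    proof -
      have "Qk k x \<in> set (rev (sorted_list_of_multiset (image_mset (\<lambda>i. x $ i) (mset_set (UNIV :: 'n set)))))"
        unfolding Qk_def using assms by (intro nth_mem) (simp flip: size_mset)
      then show ?thesis using that by auto
    qed
    with that show ?thesis by (simp add: nonneg_orthant_def)
  qed
  show "\<forall>x \<in> (nonneg_orthant :: (real ^ 'n) set). lower_convex_envelope (Qk k) nonneg_orthant x = 0"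
  proof
    fix x :: "real ^ 'n" assume x: "x \<in> nonneg_orthant"
    let ?H = "{h :: real ^ 'n \<Rightarrow> real. convex_on nonneg_orthant h \<and> (\<forall>y\<in>nonneg_orthant. h y \<le> Qk k y)}"
    have cvx: "convex (nonneg_orthant :: (real ^ 'n) set)"
      unfolding convex_def nonneg_orthant_def by auto
    have zero: "(\<lambda>_. 0) \<in> ?H" using Qnn cvx by (simp add: convex_on_const)
    have le: "h x \<le> 0" if "h \<in> ?H" for h
    proof -
      define y where "y i = (\<chi> j. if j = i then ?n * x $ i + 0 else 0)" for i
      have yin: "y i \<in> nonneg_orthant" for i
        using x by (auto simp: y_def nonneg_orthant_def)
      have "h x = h (\<Sum>i\<in>UNIV. (1 / ?n) *\<^sub>R y i)"
        unfolding y_def avg_eq by (simp add: zero_vec_def[symmetric])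
      also have "\<dots> \<le> (\<Sum>i\<in>UNIV. (1 / ?n) * h (y i))"
        using that yin by (intro jensen_avg) auto
      also have "\<dots> \<le> (\<Sum>i\<in>UNIV. (1 / ?n) * Qk k (y i))"
        using that yin by (intro sum_mono mult_left_mono) auto
      also have "\<dots> = 0"
        unfolding y_def using x assms by (subst Qk_spike) (auto simp: nonneg_orthant_def)
      finally show ?thesis .
    qed
    have "(SUP h\<in>?H. h x) = 0"
    proof (rule antisym)
      show "(SUP h\<in>?H. h x) \<le> 0" using zero le by (intro cSUP_least) auto
      show "0 \<le> (SUP h\<in>?H. h x)"
        using cSUP_upper[OF zero, of "\<lambda>h. h x"] le by (auto simp: bdd_above_def)
    qed
    then show "lower_convex_envelope (Qk k) nonneg_orthant x = 0"
      unfolding lower_convex_envelope_def .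
  qed
  show "\<not> (\<exists>f :: real ^ 'n \<Rightarrow> real. convex_on UNIV f \<and> (\<forall>x. f x \<le> Qk k x))"
  proof
    assume "\<exists>f :: real ^ 'n \<Rightarrow> real. convex_on UNIV f \<and> (\<forall>x. f x \<le> Qk k x)"
    then obtain f :: "real ^ 'n \<Rightarrow> real" where cf: "convex_on UNIV f" and fle: "\<And>x. f x \<le> Qk k x" by blast
    define s where "s = \<bar>f 0\<bar> + 1"
    define x :: "real ^ 'n" where "x = (\<chi> j. s)"
    define y where "y i = (\<chi> j. if j = i then ?n * x $ i + - s else - s)" for i
    have "f 0 = f (\<Sum>i\<in>UNIV. (1 / ?n) *\<^sub>R y i)"
      unfolding y_def avg_eq by (rule arg_cong[where f=f]) (simp add: vec_eq_iff x_def)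
    also have "\<dots> \<le> (\<Sum>i\<in>UNIV. (1 / ?n) * f (y i))"
      using cf by (intro jensen_avg) auto
    also have "\<dots> \<le> (\<Sum>i\<in>UNIV. (1 / ?n) * Qk k (y i))"
      using fle by (intro sum_mono mult_left_mono) auto
    also have "\<dots> = - s"
      unfolding y_def using assms by (subst Qk_spike) (auto simp: x_def s_def)
    finally show False unfolding s_def by linarith
  qed
qed
end
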